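(* Let $n\ge2$, let $A\subseteq\mathfrak{S}_n$ be Schur-positive and $\mathrm{cDes}$-invariant, and let $(m_\lambda)_{\lambda\vdash n}$ be nonnegative integers such that $\sum_{\pi\in A}\mathbf{x}^{\mathrm{Des}(\pi)}=\sum_{\lambda\vdash n}m_\lambda\sum_{T\in\mathrm{SYT}(\lambda)}\mathbf{x}^{\mathrm{Des}(T)}$. Then for every $0\le k<n$ the alternating sum $\sum_{i=k}^{n-1}(-1)^{k-i}m_{(n-i,1^i)}$ is nonnegative, and it equals $0$ when $k=0$.
   Context: For $\pi\in\mathfrak{S}_n$ (one-line notation), $\mathrm{Des}(\pi)=\{i\in[n-1]:\pi(i)>\pi(i+1)\}$ and $\mathrm{cDes}(\pi)=\{i\in[n]:\pi(i)>\pi(i+1)\}$ with $\pi(n+1):=\pi(1)$. $\mathbf{x}^J=\prod_{i\in J}x_i$; $i+J=\{i+j\bmod n:j\in J\}\subseteq[n]$. $A$ is Schur-positive if $\sum_{\pi\in A}\mathcal{F}_{n,\mathrm{Des}(\pi)}$ is symmetric and Schur-nonnegative, where $\mathcal{F}_{n,D}=\sum x_{i_1}\cdots x_{i_n}$ over $i_1\le\cdots\le i_n$ with $i_j<i_{j+1}$ for $j\in D$. $A$ is $\mathrm{cDes}$-invariant if there is a bijection $\psi:A\to A$ with $\mathrm{cDes}(\psi\pi)=1+\mathrm{cDes}(\pi)$. For $T\in\mathrm{SYT}(\lambda)$, $\mathrm{Des}(T)$ is the set of $i\in[n-1]$ with $i+1$ in a strictly lower row than $i$; $(n-i,1^i)$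 denotes a hook partition. *)

theory Defs
  imports "HOL-Combinatorics.Permutations"
begin

(* Permutations of [n] = {1..n} are functions nat => nat that permute {1..n}. *)

definition Des :: "nat \<Rightarrow> (nat \<Rightarrow> nat) \<Rightarrow> nat set" where
  "Des n \<pi> = {i \<in> {1..n-1}. \<pi> i > \<pi> (i+1)}"

definition cDes :: "nat \<Rightarrow> (nat \<Rightarrow> nat) \<Rightarrow> nat set" where
  "cDes n \<pi> = {i \<in> {1..n}. \<pi> i > \<pi> (if i = n then 1 else i+1)}"

(* i + J = {i + j mod n : j in J}, residues taken in [n] = {1..n} *)
definition cshift :: "nat \<Rightarrow> nat \<Rightarrow> nat set \<Rightarrow> nat set" where
  "cshift n i J = (\<lambda>j. ((i + j + n - 1) mod n) + 1) ` J"

definition cDes_invariant :: "nat \<Rightarrow> (nat \<Rightarrow> nat) set \<Rightarrow> bool" where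
  "cDes_invariant n A \<longleftrightarrow>
     (\<exists>\<psi>. bij_betw \<psi> A A \<and> (\<forall>\<pi>\<in>A. cDes n (\<psi> \<pi>) = cshift n 1 (cDes n \<pi>)))"

definition partitions :: "nat \<Rightarrow> nat list set" where
  "partitions n = {la. sorted (rev la) \<and> (\<forall>x\<in>set la. 0 < x) \<and> sum_list la = n}"

definition hook :: "nat \<Rightarrow> nat \<Rightarrow> nat list" where
  "hook n i = (n - i) # replicate i 1"

(* cells of the Young diagram, English convention, (row, column), 0-indexed *)
definition cells :: "nat list \<Rightarrow> (nat \<times> nat) set" where
  "cells la = {(r, c). r < length la \<and> c < la ! r}"

definition SYT :: "nat list \<Rightarrow> (nat \<times> nat \<Rightarrow> nat) set" where
  "SYT la = {T. bij_betw T (cells la) {1..sum_list la}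
        \<and> (\<forall>p. p \<notin> cells la \<longrightarrow> T p = 0)
        \<and> (\<forall>r c. (r, c+1) \<in> cells la \<longrightarrow> T (r, c) < T (r, c+1))
        \<and> (\<forall>r c. (r+1, c) \<in> cells la \<longrightarrow> T (r, c) < T (r+1, c))}"

definition DesT :: "nat list \<Rightarrow> (nat \<times> nat \<Rightarrow> nat) \<Rightarrow> nat set" where
  "DesT la T = {i \<in> {1..sum_list la - 1}. \<exists>p\<in>cells la. \<exists>q\<in>cells la.
       T p = i \<and> T q = i + 1 \<and> fst p < fst q}"

definition SSYT :: "nat list \<Rightarrow> (nat \<times> nat \<Rightarrow> nat) set" where
  "SSYT la = {T. (\<forall>p\<in>cells la. 1 \<le> T p)
        \<and> (\<forall>p. p \<notin> cells la \<longrightarrow> T p = 0)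
        \<and> (\<forall>r c. (r, c+1) \<in> cells la \<longrightarrow> T (r, c) \<le> T (r, c+1))
        \<and> (\<forall>r c. (r+1, c) \<in> cells la \<longrightarrow> T (r, c) < T (r+1, c))}"

(* Formal power series in variables x_1, x_2, ... are represented by their coefficient
   functions: a monomial is an exponent vector \<alpha> :: nat \<Rightarrow> nat (\<alpha> v = exponent of x_v). *)

definition schur_coeff :: "nat list \<Rightarrow> (nat \<Rightarrow> nat) \<Rightarrow> nat" where
  "schur_coeff la \<alpha> = card {T \<in> SSYT la. \<forall>v. card {p \<in> cells la. T p = v} = \<alpha> v}"

(* coefficient of x^\<alpha> in Gessel's fundamental quasisymmetric function F_{n,D} *)
definition F_coeff :: "nat \<Rightarrow> nat set \<Rightarrow> (nat \<Rightarrow> nat) \<Rightarrow> nat" where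
  "F_coeff n D \<alpha> = card {s :: nat \<Rightarrow> nat.
        (\<forall>j. j \<notin> {1..n} \<longrightarrow> s j = 0) \<and> (\<forall>j\<in>{1..n}. 1 \<le> s j)
      \<and> (\<forall>j\<in>{1..n-1}. s j \<le> s (j+1)) \<and> (\<forall>j\<in>D. j \<in> {1..n-1} \<longrightarrow> s j < s (j+1))
      \<and> (\<forall>v. card {j\<in>{1..n}. s j = v} = \<alpha> v)}"

definition QA_coeff :: "nat \<Rightarrow> (nat \<Rightarrow> nat) set \<Rightarrow> (nat \<Rightarrow> nat) \<Rightarrow> nat" where
  "QA_coeff n A \<alpha> = (\<Sum>\<pi>\<in>A. F_coeff n (Des n \<pi>) \<alpha>)"

definition symmetric_fun :: "((nat \<Rightarrow> nat) \<Rightarrow> nat) \<Rightarrow> bool" where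
  "symmetric_fun f \<longleftrightarrow> (\<forall>\<sigma> \<alpha>. \<sigma> permutes {1..} \<longrightarrow> f (\<alpha> \<circ> \<sigma>) = f \<alpha>)"

definition schur_nonneg :: "nat \<Rightarrow> ((nat \<Rightarrow> nat) \<Rightarrow> nat) \<Rightarrow> bool" where
  "schur_nonneg n f \<longleftrightarrow>
     (\<exists>c :: nat list \<Rightarrow> nat. \<forall>\<alpha>. f \<alpha> = (\<Sum>la\<in>partitions n. c la * schur_coeff la \<alpha>))"

definition schur_positive :: "nat \<Rightarrow> (nat \<Rightarrow> nat) set \<Rightarrow> bool" where
  "schur_positive n A \<longleftrightarrow> symmetric_fun (QA_coeff n A) \<and> schur_nonneg n (QA_coeff n A)"

end

theory Submission
  imports Defs
begin

lemma cells_down: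
  assumes "sorted (rev la)" "(r',c') \<in> cells la" "r \<le> r'" "c \<le> c'"
  shows "(r,c) \<in> cells la"
proof -
  have "la ! r' \<le> la ! r" using sorted_rev_nth_mono[OF assms(1) assms(3)] assms(2) by (auto simp: cells_def)
  then show ?thesis using assms by (auto simp: cells_def)
qed

lemma SYT_row_chain:
  assumes "T \<in> SYT la" "sorted (rev la)" "(r, c+d) \<in> cells la"
  shows "T (r,c) + d \<le> T (r,c+d)"
  using assms(3)
proof (induction d)
  case 0 then show ?case by simp
next
  case (Suc d)
  have "(r, c+d) \<in> cells la" using cells_down[OF assms(2) Suc.prems] by simp
  then have "T (r,c) + d \<le> T (r,c+d)" using Suc.IH by simp
  moreover have "T (r,c+d) < T (r, c+d+1)" using assms(1) Suc.prems by (auto simp: SYT_def)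
  ultimately show ?case by simp
qed

lemma SYT_col_chain:
  assumes "T \<in> SYT la" "sorted (rev la)" "(r+d, c) \<in> cells la"
  shows "T (r,c) + d \<le> T (r+d,c)"
  using assms(3)
proof (induction d)
  case 0 then show ?case by simp
next
  case (Suc d)
  have "(r+d, c) \<in> cells la" using cells_down[OF assms(2) Suc.prems] by simp
  then have "T (r,c) + d \<le> T (r+d,c)" using Suc.IH by simp
  moreover have "T (r+d,c) < T (r+d+1, c)" using assms(1) Suc.prems by (auto simp: SYT_def)
  ultimately show ?case by simp
qed

lemma SYT_mono:
  assumes "T \<in> SYT la" "sorted (rev la)" "(r',c') \<in> cells la" "r \<le> r'" "c \<le> c'"
  shows "T (r,c) \<le> T (r',c')"
proof -
  have "(r,c') \<in> cells la" using cells_down[OF assms(2,3)] assms by simp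
  then have "T (r,c) \<le> T (r,c')" using SYT_row_chain[OF assms(1,2), of r c "c'-c"] assms by simp
  also have "\<dots> \<le> T (r',c')" using SYT_col_chain[OF assms(1,2), of r "r'-r" c'] assms by simp
  finally show ?thesis .
qed

lemma sum_ones:
  assumes "\<forall>x\<in>set xs. (1::nat) \<le> x"
  shows "length xs \<le> sum_list xs" and "sum_list xs = length xs \<Longrightarrow> xs = replicate (length xs) 1"
  using assms
proof (induction xs)
  case Nil { case 1 then show ?case by simp next case 2 then show ?case by simp }
next
  case (Cons a xs)
  { case 1 then show ?case using Cons by auto
  next case 2 then show ?case using Cons by (auto simp: le_antisym) }
qed

lemma SYT_pos:
  assumes "T \<in> SYT la" "j \<in> {1..sum_list la}"
  shows "inv_into (cells la) T j \<in> cells la" "T (inv_into (cells la) T j) = j"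
proof -
  have b: "bij_betw T (cells la) {1..sum_list la}" using assms(1) by (simp add: SYT_def)
  show "inv_into (cells la) T j \<in> cells la" using b assms(2)
    by (metis bij_betw_def inv_into_into)
  show "T (inv_into (cells la) T j) = j" using b assms(2)
    by (metis bij_betw_def f_inv_into_f)
qed

lemma SYT_inj:
  assumes "T \<in> SYT la" "p \<in> cells la" "q \<in> cells la" "T p = T q"
  shows "p = q"
  using assms by (auto simp: SYT_def bij_betw_def inj_on_def)

lemma SYT_range:
  assumes "T \<in> SYT la" "p \<in> cells la"
  shows "T p \<in> {1..sum_list la}"
  using assms by (auto simp: SYT_def bij_betw_def)

lemma SYT_hook_forced:
  assumes P: "la \<in> partitions n" and T: "T \<in> SYT la" and D: "DesT la T = {1..i}" and i: "i < n"
  shows "la = hook n i"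
proof -
  have srt: "sorted (rev la)" and pos: "\<forall>x\<in>set la. 0 < x" and sl: "sum_list la = n"
    using P by (auto simp: partitions_def)
  define pos where "pos j = inv_into (cells la) T j" for j
  have pc: "pos j \<in> cells la" "T (pos j) = j" if "j \<in> {1..n}" for j
    using SYT_pos[OF T, of j] that sl by (auto simp: pos_def)
  have uniq: "p = pos j" if "p \<in> cells la" "T p = j" for p j
  proof -
    have "j \<in> {1..n}" using SYT_range[OF T that(1)] that sl by auto
    then show ?thesis using SYT_inj[OF T that(1) pc(1)] pc(2) that by auto
  qed
  have desc: "j \<in> DesT la T \<longleftrightarrow> fst (pos j) < fst (pos (j+1))" if "j \<in> {1..n-1}" for j
  proof -
    have "j \<in> {1..n}" "j+1 \<in> {1..n}" using that by auto
    show ?thesis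
    proof
      assume "j \<in> DesT la T"
      then obtain p q where "p \<in> cells la" "q \<in> cells la" "T p = j" "T q = j+1" "fst p < fst q"
        unfolding DesT_def by blast
      then show "fst (pos j) < fst (pos (j+1))" using uniq by metis
    next
      assume "fst (pos j) < fst (pos (j+1))"
      then show "j \<in> DesT la T" unfolding DesT_def sl using that pc[of j] pc[of "j+1"] \<open>j \<in> {1..n}\<close> \<open>j+1 \<in> {1..n}\<close> by blast
    qed
  qed
  have colinc: "snd (pos j) < snd (pos (j+1))" if "j \<in> {1..n-1}" "fst (pos (j+1)) \<le> fst (pos j)" for j
  proof (rule ccontr)
    assume nc: "\<not> snd (pos j) < snd (pos (j+1))"
    have "j \<in> {1..n}" "j+1 \<in> {1..n}" using that by auto
    then have "T (pos (j+1)) \<le> T (pos j)"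
      using SYT_mono[OF T srt, of "fst (pos j)" "snd (pos j)" "fst (pos (j+1))" "snd (pos (j+1))"] pc
        nc that(2) by auto
    then show False using pc \<open>j \<in> {1..n}\<close> \<open>j+1 \<in> {1..n}\<close> by simp
  qed
  have rows: "j - 1 \<le> fst (pos j)" if "1 \<le> j" "j \<le> i+1" for j
    using that
  proof (induction j rule: dec_induct)
    case base then show ?case by simp
  next
    case (step j)
    have "j \<in> DesT la T" using D step by auto
    then have "fst (pos j) < fst (pos (j+1))" using desc step i by auto
    then show ?case using step by auto
  qed
  have cols: "j - (i+1) \<le> snd (pos j)" if "i+1 \<le> j" "j \<le> n" for j
    using that
  proof (induction j rule: dec_induct)
    case base then show ?case by simp
  next
    case (step j)
    have "j \<notin> DesT la T" using D step by auto
    then have "fst (pos (j+1)) \<le> fst (pos j)" using desc[of j] step i by auto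
    then have "snd (pos j) < snd (pos (j+1))" using colinc[of j] step by auto
    then show ?case using step by auto
  qed
  have len: "i + 1 \<le> length la"
    using rows[of "i+1"] pc(1)[of "i+1"] i by (auto simp: cells_def)
  have "n - (i+1) < la ! fst (pos n)" using cols[of n] pc(1)[of n] i by (auto simp: cells_def)
  moreover have "la ! fst (pos n) \<le> la ! 0"
    using sorted_rev_nth_mono[OF srt, of 0 "fst (pos n)"] pc(1)[of n] i by (auto simp: cells_def)
  ultimately have h0: "n - i \<le> la ! 0" by linarith
  obtain a rest where la: "la = a # rest" using len by (cases la) auto
  have ones: "\<forall>x\<in>set rest. 1 \<le> x" using pos la by auto
  have "length rest \<le> sum_list rest" using sum_ones(1)[OF ones] .
  moreover have "a + sum_list rest = n" using sl la by simp
  moreover have "i \<le> length rest" using len la by simp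
  moreover have "n - i \<le> a" using h0 la by simp
  ultimately have "a = n - i" "length rest = i" "sum_list rest = length rest" using i by linarith+
  then have "rest = replicate i 1" using sum_ones(2)[OF ones] by simp
  then show ?thesis using la \<open>a = n - i\<close> by (simp add: hook_def)
qed

lemma cells_hook:
  assumes "i < n"
  shows "cells (hook n i) = {(r,c). r \<le> i \<and> (r = 0 \<longrightarrow> c < n-i) \<and> (0 < r \<longrightarrow> c = 0)}"
proof -
  have "(hook n i) ! r = (if r = 0 then n - i else 1)" if "r \<le> i" for r
    using that by (cases r) (auto simp: hook_def)
  then show ?thesis using assms by (auto simp: cells_def hook_def nth_Cons split: nat.splits)
qed

lemma sum_hook: "i < n \<Longrightarrow> sum_list (hook n i) = n"
  by (simp add: hook_def sum_list_replicate)

definition T0 :: "nat \<Rightarrow> nat \<Rightarrow> nat \<times> nat \<Rightarrow> nat" where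
  "T0 n i p = (if p \<in> cells (hook n i) then (if snd p = 0 then fst p + 1 else snd p + i + 1) else 0)"

lemma T0_SYT:
  assumes "i < n"
  shows "T0 n i \<in> SYT (hook n i)"
proof -
  note ch = cells_hook[OF assms]
  have inj: "inj_on (T0 n i) (cells (hook n i))"
    unfolding inj_on_def T0_def ch by auto
  have img: "T0 n i ` cells (hook n i) = {1..n}"
  proof
    show "T0 n i ` cells (hook n i) \<subseteq> {1..n}" unfolding T0_def ch using assms by auto
  next
    show "{1..n} \<subseteq> T0 n i ` cells (hook n i)"
    proof
      fix v assume v: "v \<in> {1..n}"
      show "v \<in> T0 n i ` cells (hook n i)"
      proof (cases "v \<le> i+1")
        case True
        then have "(v-1, 0) \<in> cells (hook n i)" "T0 n i (v-1,0) = v" using v assms unfolding ch T0_def by auto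
        then show ?thesis by (metis image_eqI)
      next
        case False
        then have "(0, v-i-1) \<in> cells (hook n i)" "T0 n i (0, v-i-1) = v" using v assms unfolding ch T0_def by auto
        then show ?thesis by (metis image_eqI)
      qed
    qed
  qed
  show ?thesis unfolding SYT_def sum_hook[OF assms]
    using inj img by (auto simp: bij_betw_def T0_def ch)
qed

lemma T0_Des:
  assumes "i < n"
  shows "DesT (hook n i) (T0 n i) = {1..i}"
proof -
  note ch = cells_hook[OF assms]
  show ?thesis
  proof
    show "DesT (hook n i) (T0 n i) \<subseteq> {1..i}"
    proof
      fix j assume j: "j \<in> DesT (hook n i) (T0 n i)"
      then obtain p q where pq: "p \<in> cells (hook n i)" "q \<in> cells (hook n i)" "T0 n i p = j" "T0 n i q = j+1" "fst p < fst q"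
        unfolding DesT_def by blast
      have "j \<ge> 1" using j unfolding DesT_def by auto
      moreover have "snd q = 0" using pq unfolding ch by auto
      then have "j = fst q" using pq unfolding T0_def by auto
      ultimately show "j \<in> {1..i}" using pq unfolding ch by auto
    qed
  next
    show "{1..i} \<subseteq> DesT (hook n i) (T0 n i)"
    proof
      fix j assume j: "j \<in> {1..i}"
      have "(j-1,0) \<in> cells (hook n i)" "(j,0) \<in> cells (hook n i)" "T0 n i (j-1,0) = j" "T0 n i (j,0) = j+1"
        using j assms unfolding ch T0_def by auto
      then show "j \<in> DesT (hook n i) (T0 n i)" unfolding DesT_def sum_hook[OF assms]
        using j assms by force
    qed
  qed
qed

lemma T0_unique:
  assumes i: "i < n" and T: "T \<in> SYT (hook n i)" and D: "DesT (hook n i) T = {1..i}"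
  shows "T = T0 n i"
proof -
  note ch = cells_hook[OF i]
  let ?la = "hook n i"
  have srt: "sorted (rev ?la)" using i by (auto simp: hook_def sorted_append)
  have sl: "sum_list ?la = n" using sum_hook[OF i] .
  define pos where "pos j = inv_into (cells ?la) T j" for j
  have pc: "pos j \<in> cells ?la" "T (pos j) = j" if "j \<in> {1..n}" for j
    using SYT_pos[OF T, of j] that sl by (auto simp: pos_def)
  have uniq: "p = pos j" if "p \<in> cells ?la" "T p = j" for p j
  proof -
    have "j \<in> {1..n}" using SYT_range[OF T that(1)] that sl by auto
    then show ?thesis using SYT_inj[OF T that(1) pc(1)] pc(2) that by auto
  qed
  have desc: "fst (pos j) < fst (pos (j+1))" if "j \<in> {1..i}" for j
  proof -
    have "j \<in> DesT ?la T" using D that by auto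
    then obtain p q where "p \<in> cells ?la" "q \<in> cells ?la" "T p = j" "T q = j+1" "fst p < fst q"
      unfolding DesT_def by blast
    then show ?thesis using uniq by metis
  qed
  have rows: "j - 1 \<le> fst (pos j)" if "1 \<le> j" "j \<le> i+1" for j
    using that
  proof (induction j rule: dec_induct)
    case base then show ?case by simp
  next
    case (step j)
    then have "fst (pos j) < fst (pos (j+1))" using desc by auto
    then show ?case using step by auto
  qed
  have "pos (i+1) \<in> cells ?la" using pc i by auto
  moreover have "i \<le> fst (pos (i+1))" using rows[of "i+1"] by simp
  moreover have "pos 1 = (0,0)"
  proof -
    have "pos 1 \<in> cells ?la" "T (pos 1) = 1" using pc[of 1] i by auto
    moreover have "(0,0) \<in> cells ?la" using i unfolding ch by auto
    ultimately have "T (0,0) \<le> 1" using SYT_mono[OF T srt, of "fst (pos 1)" "snd (pos 1)" 0 0] by (cases "pos 1") auto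
    moreover have "1 \<le> T (0,0)" using SYT_range[OF T \<open>(0,0) \<in> cells ?la\<close>] by simp
    ultimately show ?thesis using uniq[of "(0,0)" 1] \<open>(0,0) \<in> cells ?la\<close> by simp
  qed
  ultimately have "pos (i+1) = (i, 0)" unfolding ch by (cases "pos (i+1)"; cases "i = 0") auto
  then have Ti: "T (i,0) = i+1" using pc[of "i+1"] i by auto
  have c0: "T (r,0) = r + 1" if "r \<le> i" for r
  proof -
    have "(0,0) \<in> cells ?la" "(r,0) \<in> cells ?la" using that i unfolding ch by auto
    have a: "T (0,0) + r \<le> T (r,0)" using SYT_col_chain[OF T srt, of 0 r 0] \<open>(r,0) \<in> cells ?la\<close> by simp
    have b: "T (r,0) + (i - r) \<le> T (i,0)" using SYT_col_chain[OF T srt, of r "i-r" 0] that i unfolding ch by simp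
    have "1 \<le> T (0,0)" using SYT_range[OF T \<open>(0,0) \<in> cells ?la\<close>] by simp
    then show ?thesis using a b Ti that by linarith
  qed
  have r0: "T (0,c) = c + i + 1" if "1 \<le> c" "c < n - i" for c
  proof -
    have cc: "(0,1) \<in> cells ?la" "(0,c) \<in> cells ?la" "(0,n-i-1) \<in> cells ?la" using that unfolding ch by auto
    have a: "T (0,1) + (c-1) \<le> T (0,c)" using SYT_row_chain[OF T srt, of 0 1 "c-1"] cc that by simp
    have b: "T (0,c) + (n-i-1-c) \<le> T (0,n-i-1)" using SYT_row_chain[OF T srt, of 0 c "n-i-1-c"] cc that by simp
    have "T (0,n-i-1) \<le> n" using SYT_range[OF T cc(3)] sl by simp
    have "T (0,1) \<in> {1..n}" using SYT_range[OF T cc(1)] sl by simp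
    moreover have "T (0,1) \<noteq> v" if "v \<in> {1..i+1}" for v
    proof
      assume e: "T (0,1) = v"
      have "(v-1,0) \<in> cells ?la" using that i unfolding ch by auto
      moreover have "T (v-1,0) = v" using c0[of "v-1"] that by auto
      ultimately have "(0::nat,1::nat) = (v-1,0)" using SYT_inj[OF T cc(1), of "(v-1,0)"] e by simp
      then show False by simp
    qed
    ultimately have "T (0,1) \<notin> {1..i+1}" "1 \<le> T (0,1)" by auto
    then have "i + 2 \<le> T (0,1)" by auto
    then show ?thesis using a b \<open>T (0,n-i-1) \<le> n\<close> that by linarith
  qed
  show ?thesis
  proof
    fix p
    show "T p = T0 n i p"
    proof (cases "p \<in> cells ?la")
      case False then show ?thesis using T unfolding SYT_def T0_def by (cases p) simp
    next
      case True
      obtain r c where p: "p = (r,c)" by (cases p)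
      show ?thesis
      proof (cases "c = 0")
        case True then show ?thesis using \<open>p \<in> cells ?la\<close> c0 p unfolding ch T0_def by auto
      next
        case False then show ?thesis using \<open>p \<in> cells ?la\<close> r0 p unfolding ch T0_def by auto
      qed
    qed
  qed
qed

lemma count_SYT:
  assumes "la \<in> partitions n" "i < n"
  shows "card {T\<in>SYT la. DesT la T = {1..i}} = (if la = hook n i then 1 else 0)"
proof (cases "la = hook n i")
  case True
  have "{T\<in>SYT la. DesT la T = {1..i}} = {T0 n i}"
  proof
    show "{T0 n i} \<subseteq> {T\<in>SYT la. DesT la T = {1..i}}" using True T0_SYT[OF assms(2)] T0_Des[OF assms(2)] by simp
    show "{T\<in>SYT la. DesT la T = {1..i}} \<subseteq> {T0 n i}"
    proof
      fix T assume "T \<in> {T\<in>SYT la. DesT la T = {1..i}}"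
      then have "T = T0 n i" using True T0_unique[OF assms(2), of T] by simp
      then show "T \<in> {T0 n i}" by simp
    qed
  qed
  then show ?thesis using True by simp
next
  case False
  have "{T\<in>SYT la. DesT la T = {1..i}} = {}"
  proof (rule ccontr)
    assume "{T\<in>SYT la. DesT la T = {1..i}} \<noteq> {}"
    then obtain T where "T \<in> SYT la" "DesT la T = {1..i}" by blast
    then show False using SYT_hook_forced[OF assms(1) _ _ assms(2)] False by blast
  qed
  then show ?thesis using False by (simp only: card.empty if_False)
qed

lemma finite_partitions: "finite (partitions n)"
proof (rule finite_subset[OF _ finite_lists_length_le[of "{0..n}" n]])
  show "partitions n \<subseteq> {xs. set xs \<subseteq> {0..n} \<and> length xs \<le> n}"
  proof
    fix xs assume "xs \<in> partitions n"
    then have a: "\<forall>x\<in>set xs. 1 \<le> x" "sum_list xs = n" by (auto simp: partitions_def Suc_le_eq)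
    have "set xs \<subseteq> {0..n}" using a(2) member_le_sum_list[of _ xs] by auto
    moreover have "length xs \<le> n" using sum_ones(1)[OF a(1)] a(2) by simp
    ultimately show "xs \<in> {xs. set xs \<subseteq> {0..n} \<and> length xs \<le> n}" by simp
  qed
qed simp

lemma hook_in: "i < n \<Longrightarrow> hook n i \<in> partitions n"
  by (auto simp: partitions_def hook_def sorted_append sum_list_replicate)

lemma key:
  assumes H: "\<forall>J. card {\<pi>\<in>A. Des n \<pi> = J}
               = (\<Sum>la\<in>partitions n. m la * card {T\<in>SYT la. DesT la T = J})"
    and i: "i < n"
  shows "card {\<pi>\<in>A. Des n \<pi> = {1..i}} = m (hook n i)"
proof -
  have "card {\<pi>\<in>A. Des n \<pi> = {1..i}} = (\<Sum>la\<in>partitions n. m la * card {T\<in>SYT la. DesT la T = {1..i}})"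
    using H by blast
  also have "\<dots> = (\<Sum>la\<in>partitions n. if la = hook n i then m la else 0)"
  proof (rule sum.cong[OF refl])
    fix la assume "la \<in> partitions n"
    show "m la * card {T\<in>SYT la. DesT la T = {1..i}} = (if la = hook n i then m la else 0)"
      unfolding count_SYT[OF \<open>la \<in> partitions n\<close> i] by simp
  qed
  also have "\<dots> = m (hook n i)"
    using sum.delta[OF finite_partitions, of "hook n i" m] hook_in[OF i] by simp
  finally show ?thesis .
qed

lemma chain_le:
  fixes f :: "nat \<Rightarrow> nat"
  assumes "\<forall>j. a \<le> j \<and> j < b \<longrightarrow> f j \<le> f (j+1)" "a \<le> b"
  shows "f a \<le> f b"
  using assms(2)
proof (induction b rule: dec_induct)
  case base then show ?case by simp
next
  case (step j)
  have "f j \<le> f (j+1)" using assms(1) step(1,2) by blast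
  then show ?case using step by simp
qed

lemma chain_ge:
  fixes f :: "nat \<Rightarrow> nat"
  assumes "\<forall>j. a \<le> j \<and> j < b \<longrightarrow> f (j+1) \<le> f j" "a \<le> b"
  shows "f b \<le> f a"
  using assms(2)
proof (induction b rule: dec_induct)
  case base then show ?case by simp
next
  case (step j)
  have "f (j+1) \<le> f j" using assms(1) step(1,2) by blast
  then show ?case using step by simp
qed

lemma cDes_nonempty:
  assumes "\<pi> permutes {1..n}" "n \<ge> 2"
  shows "cDes n \<pi> \<noteq> {}"
proof
  assume e: "cDes n \<pi> = {}"
  have st: "\<pi> j \<le> \<pi> (if j = n then 1 else j+1)" if "j \<in> {1..n}" for j
    using e that unfolding cDes_def by (metis (no_types, lifting) empty_iff mem_Collect_eq not_le_imp_less)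
  have "\<forall>j. 2 \<le> j \<and> j < n \<longrightarrow> \<pi> j \<le> \<pi> (j+1)"
  proof (intro allI impI)
    fix j assume j: "2 \<le> j \<and> j < n"
    then have "\<pi> j \<le> \<pi> (if j = n then 1 else j+1)" using st[of j] by simp
    then show "\<pi> j \<le> \<pi> (j+1)" using j by simp
  qed
  then have "\<pi> 2 \<le> \<pi> n" using chain_le[of 2 n \<pi>] assms(2) by simp
  moreover have "\<pi> n \<le> \<pi> 1" using st[of n] assms(2) by simp
  moreover have "\<pi> 1 \<le> \<pi> 2" using st[of 1] assms(2) by (simp add: numeral_2_eq_2)
  ultimately have "\<pi> 1 = \<pi> 2" by simp
  moreover have "inj \<pi>" using assms(1) permutes_inj by blast
  ultimately show False by (metis inj_eq numeral_One numeral_eq_iff semiring_norm(85))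
qed

lemma cDes_not_full:
  assumes "\<pi> permutes {1..n}" "n \<ge> 2"
  shows "cDes n \<pi> \<noteq> {1..n}"
proof
  assume e: "cDes n \<pi> = {1..n}"
  have st: "\<pi> j > \<pi> (if j = n then 1 else j+1)" if "j \<in> {1..n}" for j
    using e that unfolding cDes_def by blast
  have "\<forall>j. 1 \<le> j \<and> j < n \<longrightarrow> \<pi> (j+1) \<le> \<pi> j"
  proof (intro allI impI)
    fix j assume j: "1 \<le> j \<and> j < n"
    then have "\<pi> j > \<pi> (if j = n then 1 else j+1)" using st[of j] by simp
    then show "\<pi> (j+1) \<le> \<pi> j" using j by simp
  qed
  then have "\<pi> n \<le> \<pi> 1" using chain_ge[of 1 n \<pi>] assms(2) by simp
  moreover have "\<pi> n > \<pi> 1" using st[of n] assms(2) by simp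
  ultimately show False by simp
qed

lemma Des_cDes: "Des n \<pi> = cDes n \<pi> \<inter> {1..n-1}" "cDes n \<pi> \<subseteq> {1..n}"
  unfolding Des_def cDes_def by auto

lemma cshift_hook:
  assumes "i < n"
  shows "cshift n 1 (insert n {1..i}) = {1..i+1}"
proof -
  have e: "(\<lambda>j. ((1 + j + n - 1) mod n) + 1) ` (insert n {1..i}) = {1..i+1}"
  proof
    show "(\<lambda>j. ((1 + j + n - 1) mod n) + 1) ` (insert n {1..i}) \<subseteq> {1..i+1}"
      using assms by auto
    show "{1..i+1} \<subseteq> (\<lambda>j. ((1 + j + n - 1) mod n) + 1) ` (insert n {1..i})"
    proof
      fix v assume v: "v \<in> {1..i+1}"
      show "v \<in> (\<lambda>j. ((1 + j + n - 1) mod n) + 1) ` (insert n {1..i})"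
      proof (cases "v = 1")
        case True then show ?thesis using assms by (intro image_eqI[of _ _ n]) auto
      next
        case False
        have e1: "1 + (v-1) + n - 1 = (v - 1) + n" using False v by simp
        have lt: "v - 1 < n" using v assms by auto
        have e2: "((v - 1) + n) mod n = v - 1" by (simp only: mod_add_self2 mod_less[OF lt])
        have eq: "(1 + (v-1) + n - 1) mod n + 1 = v" unfolding e1 e2 using False v by simp
        show ?thesis
        proof (rule image_eqI[of v _ "v-1"])
          show "v = (\<lambda>j. ((1 + j + n - 1) mod n) + 1) (v-1)" using eq by (metis)
          show "v - 1 \<in> insert n {1..i}" using False v by auto
        qed
      qed
    qed
  qed
  then show ?thesis by (simp add: cshift_def)
qed

lemma telescope:
  fixes F :: "nat \<Rightarrow> int"
  shows "(\<Sum>i=k..k+d. (-1) ^ (i-k) * (F i + F (i+1))) = F k + (-1)^d * F (k+d+1)"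
proof (induction d)
  case 0 then show ?case by simp
next
  case (Suc d)
  have "(\<Sum>i=k..k+Suc d. (-1::int) ^ (i-k) * (F i + F (i+1)))
      = (\<Sum>i=k..k+d. (-1) ^ (i-k) * (F i + F (i+1))) + (-1)^(Suc d) * (F (k+d+1) + F (k+d+2))"
    by simp
  also have "\<dots> = F k + (-1)^(Suc d) * F (k + Suc d + 1)" using Suc by (simp add: algebra_simps)
  finally show ?case .
qed

lemma cshift_inj: "inj_on (\<lambda>j. ((1 + j + n - 1) mod n) + 1) {1..(n::nat)}"
proof (rule inj_onI)
  fix x y assume xy: "x \<in> {1..n}" "y \<in> {1..n}" "(1 + x + n - 1) mod n + 1 = (1 + y + n - 1) mod n + 1"
  have e1: "1 + x + n - 1 = x + n" "1 + y + n - 1 = y + n" by arith+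
  have ex: "(1 + x + n - 1) mod n = x mod n" "(1 + y + n - 1) mod n = y mod n"
    unfolding e1 by (simp only: mod_add_self2)+
  have "x mod n = y mod n" using xy(3) unfolding ex by simp
  have m: "z mod n = (if z = n then 0 else z)" if "z \<in> {1..n}" for z
    using that by auto
  show "x = y" using m[OF xy(1)] m[OF xy(2)] \<open>x mod n = y mod n\<close> xy(1,2) by (auto split: if_splits)
qed

lemma shift_card:
  assumes fin: "finite A" and inv: "cDes_invariant n A" and S: "S \<subseteq> {1..n}"
  shows "card {\<pi>\<in>A. cDes n \<pi> = S} = card {\<pi>\<in>A. cDes n \<pi> = cshift n 1 S}"
proof -
  obtain \<psi> where b: "bij_betw \<psi> A A" and c: "\<forall>\<pi>\<in>A. cDes n (\<psi> \<pi>) = cshift n 1 (cDes n \<pi>)"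
    using inv unfolding cDes_invariant_def by blast
  have cinj: "cshift n 1 X = cshift n 1 Y \<Longrightarrow> X \<subseteq> {1..n} \<Longrightarrow> Y \<subseteq> {1..n} \<Longrightarrow> X = Y" for X Y
    unfolding cshift_def using inj_on_image_eq_iff[OF cshift_inj[of n], of X Y] by simp
  have "bij_betw \<psi> {\<pi>\<in>A. cDes n \<pi> = S} {\<pi>\<in>A. cDes n \<pi> = cshift n 1 S}"
    unfolding bij_betw_def
  proof
    show "inj_on \<psi> {\<pi>\<in>A. cDes n \<pi> = S}" 
    proof (rule inj_on_subset)
      show "inj_on \<psi> A" using b by (simp add: bij_betw_def)
      show "{\<pi>\<in>A. cDes n \<pi> = S} \<subseteq> A" by blast
    qed
    show "\<psi> ` {\<pi>\<in>A. cDes n \<pi> = S} = {\<pi>\<in>A. cDes n \<pi> = cshift n 1 S}"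
    proof
      show "\<psi> ` {\<pi>\<in>A. cDes n \<pi> = S} \<subseteq> {\<pi>\<in>A. cDes n \<pi> = cshift n 1 S}"
      proof
        fix \<sigma> assume "\<sigma> \<in> \<psi> ` {\<pi>\<in>A. cDes n \<pi> = S}"
        then obtain \<pi> where "\<pi> \<in> A" "cDes n \<pi> = S" "\<sigma> = \<psi> \<pi>" by blast
        moreover have "\<psi> \<pi> \<in> A" using b \<open>\<pi> \<in> A\<close> unfolding bij_betw_def by blast
        ultimately show "\<sigma> \<in> {\<pi>\<in>A. cDes n \<pi> = cshift n 1 S}" using c by simp
      qed
      show "{\<pi>\<in>A. cDes n \<pi> = cshift n 1 S} \<subseteq> \<psi> ` {\<pi>\<in>A. cDes n \<pi> = S}"
      proof
        fix \<sigma> assume s: "\<sigma> \<in> {\<pi>\<in>A. cDes n \<pi> = cshift n 1 S}"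
        then obtain \<pi> where p: "\<pi> \<in> A" "\<sigma> = \<psi> \<pi>" using b unfolding bij_betw_def by blast
        then have "cshift n 1 (cDes n \<pi>) = cshift n 1 S" using c s by auto
        then have "cDes n \<pi> = S" using cinj[OF _ Des_cDes(2) S] by simp
        then show "\<sigma> \<in> \<psi> ` {\<pi>\<in>A. cDes n \<pi> = S}" using p by blast
      qed
    qed
  qed
  then show ?thesis by (rule bij_betw_same_card)
qed

lemma split_top:
  fixes X :: "nat set"
  assumes "X \<subseteq> {1..n}" "1 \<le> n"
  shows "X = (X \<inter> {1..n-1}) \<union> (X \<inter> {n})"
proof -
  have "{1..n} = {1..n-1} \<union> {n}" using assms(2) by auto
  then show ?thesis using assms(1) by blast
qed

theorem lemma3p8:
  fixes n :: nat and A :: "(nat \<Rightarrow> nat) set" and m :: "nat list \<Rightarrow> nat"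
  assumes "n \<ge> 2"
    and "\<forall>\<pi>\<in>A. \<pi> permutes {1..n}"
    and "schur_positive n A"
    and "cDes_invariant n A"
    and "\<forall>J. card {\<pi>\<in>A. Des n \<pi> = J}
               = (\<Sum>la\<in>partitions n. m la * card {T\<in>SYT la. DesT la T = J})"
  shows "(\<forall>k<n. 0 \<le> (\<Sum>i=k..n-1. (-1::int) ^ (i - k) * int (m (hook n i)))) \<and>
         (\<Sum>i=0..n-1. (-1::int) ^ i * int (m (hook n i))) = 0"
proof -
  have fin: "finite A"
    using finite_subset[OF _ finite_permutations[of "{1..n}"]] assms(2) by blast
  define f where "f j = card {\<pi>\<in>A. cDes n \<pi> = {1..j}}" for j
  define F where "F j = int (f j)" for j
  have f0: "f 0 = 0"
  proof -
    have "{\<pi>\<in>A. cDes n \<pi> = {1..0}} = {}" using cDes_nonempty assms(1,2) by auto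
    then show ?thesis unfolding f_def by (simp only: card.empty)
  qed
  have fn: "f n = 0"
  proof -
    have "{\<pi>\<in>A. cDes n \<pi> = {1..n}} = {}" using cDes_not_full assms(1,2) by auto
    then show ?thesis unfolding f_def by (simp only: card.empty)
  qed
  have a: "int (m (hook n i)) = F i + F (i+1)" if i: "i < n" for i
  proof -
    have split: "{\<pi>\<in>A. Des n \<pi> = {1..i}} = {\<pi>\<in>A. cDes n \<pi> = {1..i}} \<union> {\<pi>\<in>A. cDes n \<pi> = insert n {1..i}}"
    proof (intro set_eqI iffI)
      fix \<pi> assume "\<pi> \<in> {\<pi>\<in>A. Des n \<pi> = {1..i}}"
      then have p: "\<pi> \<in> A" "cDes n \<pi> \<inter> {1..n-1} = {1..i}" using Des_cDes(1) by auto
      have "cDes n \<pi> \<subseteq> {1..n}" by (rule Des_cDes(2))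
      then have e: "cDes n \<pi> = {1..i} \<union> (cDes n \<pi> \<inter> {n})" using split_top[of "cDes n \<pi>" n] p(2) assms(1) by simp
      have "cDes n \<pi> = {1..i} \<or> cDes n \<pi> = insert n {1..i}"
      proof (cases "n \<in> cDes n \<pi>")
        case True then have "cDes n \<pi> \<inter> {n} = {n}" by blast
        then show ?thesis using e by simp
      next
        case False then have "cDes n \<pi> \<inter> {n} = {}" by blast
        then show ?thesis using e by simp
      qed
      then show "\<pi> \<in> {\<pi>\<in>A. cDes n \<pi> = {1..i}} \<union> {\<pi>\<in>A. cDes n \<pi> = insert n {1..i}}" using p(1) by auto
    next
      fix \<pi> assume "\<pi> \<in> {\<pi>\<in>A. cDes n \<pi> = {1..i}} \<union> {\<pi>\<in>A. cDes n \<pi> = insert n {1..i}}"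
      then show "\<pi> \<in> {\<pi>\<in>A. Des n \<pi> = {1..i}}" using Des_cDes(1)[of n \<pi>] i by auto
    qed
    have "m (hook n i) = card {\<pi>\<in>A. Des n \<pi> = {1..i}}" using key[OF assms(5) i] by simp
    also have "\<dots> = card {\<pi>\<in>A. cDes n \<pi> = {1..i}} + card {\<pi>\<in>A. cDes n \<pi> = insert n {1..i}}"
    proof -
      have "n \<notin> {1..i}" using i by simp
      then have "insert n {1..i} \<noteq> {1..i}" by blast
      then show ?thesis unfolding split by (intro card_Un_disjoint) (use fin in auto)
    qed
    also have "card {\<pi>\<in>A. cDes n \<pi> = insert n {1..i}} = f (i+1)"
      unfolding f_def using shift_card[OF fin assms(4), of "insert n {1..i}"] cshift_hook[OF i] i by simp
    finally show ?thesis unfolding F_def f_def by simp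
  qed
  have main: "(\<Sum>i=k..n-1. (-1::int) ^ (i - k) * int (m (hook n i))) = F k" if k: "k < n" for k
  proof -
    have "(\<Sum>i=k..n-1. (-1::int) ^ (i - k) * int (m (hook n i))) = (\<Sum>i=k..k+(n-1-k). (-1::int) ^ (i - k) * (F i + F (i+1)))"
      using k by (intro sum.cong) (auto simp: a)
    also have "\<dots> = F k + (-1)^(n-1-k) * F (k + (n-1-k) + 1)" by (rule telescope)
    also have "k + (n-1-k) + 1 = n" using k by simp
    finally show ?thesis using fn unfolding F_def by simp
  qed
  show ?thesis
  proof
    show "\<forall>k<n. 0 \<le> (\<Sum>i=k..n-1. (-1::int) ^ (i - k) * int (m (hook n i)))"
      using main unfolding F_def by simp
    show "(\<Sum>i=0..n-1. (-1::int) ^ i * int (m (hook n i))) = 0"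
      using main[of 0] assms(1) f0 unfolding F_def by simp
  qed
qed

end
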